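(* For all $t,s_1,s_2\in\Lambda^\infty$: if $t\to^\infty_N s_1$ and $t\to^\infty_N s_2$, then $s_1\equiv s_2$.
   Context: Fix an infinite set $V$ of variables and a set $C$ of constants with $V\cap C=\emptyset$, containing a distinguished constant $\bot$. $\Lambda^\infty$ is the set of infinitary lambda-terms: all finite and infinite terms generated coinductively by $t ::= c\mid x\mid t\,t\mid\lambda x.t$, identified up to $\alpha$-equivalence; $s[t/x]$ is capture-avoiding substitution; $\equiv$ is identity; an atom is a variable or constant. $\to_\beta$ is the compatible closure of $\{((\lambda x.s)t,s[t/x])\}$, $\to^*_\beta$ its reflexive-transitive closure. A term is in head normal form (hnf) if it is $\lambda x_1\ldots x_m.\,a\,t_1\ldots t_n$ ($m,n\ge0$, $a$ an atom, $a\not\equiv\bot$); $t$ has a hnf if $t\to^*_\beta t'$ for some $t'$ in hnf. Weak head contraction $\to_w$ is the least relation with $(\lambda x.s)t\to_w s[t/x]$ and $s\to_w s'\Rightarrow st\to_w s't$; head contraction $\to_h$ is the least relation with $s\to_w s'\Rightarrow s\to_h s'$ and $s\to_h s'\Rightarrow\lambda x.s\to_h\lambda x.s'$; $\to^*_h$ is its reflexive-transitive closure. The relation $\to^\infty_N$ is the greatest relation such that whenever $t\to^\infty_N u$, either (i) $u\equiv\bot$ and $t$ has no hnf, or (ii) $u\equiv\lambda x_1\ldots x_n.\,a\,t_1'\ldots t_m'$ with $a$ an atom, $a\not\equiv\bot$, and there are $t_1,\ldots,t_m$ with $t\to^*_h\lambda x_1\ldots x_n.\,a\,t_1\ldots t_m$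 and $t_i\to^\infty_N t_i'$ for $i=1,\ldots,m$. *)

theory Defs
  imports "HOL-Library.BNF_Corec"
begin

text \<open>Infinitary lambda-terms modulo alpha-equivalence, represented with de Bruijn
indices as a codatatype (finite and infinite terms). Constants range over the
type 'c; the distinguished constant bottom is a parameter bt of the notions below.\<close>

codatatype 'c trm = Var nat | Con 'c | App "'c trm" "'c trm" | Lam "'c trm"

primcorec lift :: "nat \<Rightarrow> 'c trm \<Rightarrow> 'c trm" where
  "lift k t = (case t of
      Var n \<Rightarrow> Var (if n < k then n else Suc n)
    | Con c \<Rightarrow> Con c
    | App a b \<Rightarrow> App (lift k a) (lift k b)
    | Lam a \<Rightarrow> Lam (lift (Suc k) a))"

corec subst :: "nat \<Rightarrow> 'c trm \<Rightarrow> 'c trm \<Rightarrow> 'c trm" where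
  "subst k s t = (case t of
      Var n \<Rightarrow> (if n = k then s else Var (if n < k then n else n - 1))
    | Con c \<Rightarrow> Con c
    | App a b \<Rightarrow> App (subst k s a) (subst k s b)
    | Lam a \<Rightarrow> Lam (subst (Suc k) (lift 0 s) a))"

inductive beta :: "'c trm \<Rightarrow> 'c trm \<Rightarrow> bool" where
  beta_redex: "beta (App (Lam s) t) (subst 0 t s)"
| beta_appL: "beta s s' \<Longrightarrow> beta (App s t) (App s' t)"
| beta_appR: "beta t t' \<Longrightarrow> beta (App s t) (App s t')"
| beta_lam: "beta s s' \<Longrightarrow> beta (Lam s) (Lam s')"

inductive whead :: "'c trm \<Rightarrow> 'c trm \<Rightarrow> bool" where
  whead_redex: "whead (App (Lam s) t) (subst 0 t s)"
| whead_app: "whead s s' \<Longrightarrow> whead (App s t) (App s' t)"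

inductive head :: "'c trm \<Rightarrow> 'c trm \<Rightarrow> bool" where
  head_w: "whead s s' \<Longrightarrow> head s s'"
| head_lam: "head s s' \<Longrightarrow> head (Lam s) (Lam s')"

definition good_atom :: "'c \<Rightarrow> 'c trm \<Rightarrow> bool" where
  "good_atom bt a \<longleftrightarrow> (\<exists>n. a = Var n) \<or> (\<exists>c. a = Con c \<and> c \<noteq> bt)"

definition lams :: "nat \<Rightarrow> 'c trm \<Rightarrow> 'c trm" where
  "lams n t = (Lam ^^ n) t"

definition apps :: "'c trm \<Rightarrow> 'c trm list \<Rightarrow> 'c trm" where
  "apps a ts = foldl App a ts"

definition is_hnf :: "'c \<Rightarrow> 'c trm \<Rightarrow> bool" where
  "is_hnf bt t \<longleftrightarrow> (\<exists>m a ts. good_atom bt a \<and> t = lams m (apps a ts))"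

definition has_hnf :: "'c \<Rightarrow> 'c trm \<Rightarrow> bool" where
  "has_hnf bt t \<longleftrightarrow> (\<exists>t'. beta\<^sup>*\<^sup>* t t' \<and> is_hnf bt t')"

coinductive inf_N :: "'c \<Rightarrow> 'c trm \<Rightarrow> 'c trm \<Rightarrow> bool" for bt :: 'c where
  inf_N_bot: "\<not> has_hnf bt t \<Longrightarrow> inf_N bt t (Con bt)"
| inf_N_hnf: "\<lbrakk> good_atom bt a; head\<^sup>*\<^sup>* t (lams n (apps a ts)); list_all2 (inf_N bt) ts ts' \<rbrakk>
     \<Longrightarrow> inf_N bt t (lams n (apps a ts'))"

end

theory Submission
  imports Defs
begin

definition atom :: "'c trm \<Rightarrow> bool" where
  "atom a \<longleftrightarrow> (\<exists>k. a = Var k) \<or> (\<exists>c. a = Con c)"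

lemma lams_Suc: "lams (Suc m) x = Lam (lams m x)"
  by (simp add: lams_def)
lemma lams_0[simp]: "lams 0 x = x"
  by (simp add: lams_def)
lemma apps_snoc: "apps a (us @ [u]) = App (apps a us) u"
  by (simp add: apps_def)
lemma apps_Nil[simp]: "apps a [] = a"
  by (simp add: apps_def)

lemma apps_not_Lam: "atom a \<Longrightarrow> apps a ts \<noteq> Lam s"
  by (induct ts rule: rev_induct) (auto simp: atom_def apps_snoc)

lemma apps_inj: "atom a \<Longrightarrow> atom a' \<Longrightarrow> apps a ts = apps a' ts' \<Longrightarrow> a = a' \<and> ts = ts'"
proof (induct ts arbitrary: ts' rule: rev_induct)
  case Nil
  then show ?case by (cases ts' rule: rev_exhaust) (auto simp: atom_def apps_snoc)
next
  case (snoc x xs)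
  then show ?case by (cases ts' rule: rev_exhaust) (auto simp: atom_def apps_snoc)
qed

lemma lams_inj: "atom a \<Longrightarrow> atom a' \<Longrightarrow> lams n (apps a ts) = lams n' (apps a' ts') \<Longrightarrow> n = n' \<and> a = a' \<and> ts = ts'"
proof (induct n arbitrary: n')
  case 0
  show ?case
  proof (cases n')
    case 0 with "0.prems" apps_inj show ?thesis by simp
  next
    case (Suc m) with "0.prems" apps_not_Lam[of a ts "lams m (apps a' ts')"] show ?thesis by (simp add: lams_Suc)
  qed
next
  case (Suc n)
  show ?case
  proof (cases n')
    case 0 with Suc.prems apps_not_Lam[of a' ts' "lams n (apps a ts)"] show ?thesis by (simp add: lams_Suc)
  next
    case (Suc m) with Suc.prems Suc.hyps[of m] show ?thesis by (simp add: lams_Suc)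
  qed
qed

lemma whead_Lam: "\<not> whead (Lam s) y"
proof
  assume "whead (Lam s) y" then show False by (cases rule: whead.cases)
qed

lemma whead_det: "whead x y \<Longrightarrow> whead x z \<Longrightarrow> y = z"
proof (induct arbitrary: z rule: whead.induct)
  case (whead_redex s t)
  from whead_redex show ?case
  proof (cases rule: whead.cases)
    case whead_redex then show ?thesis by simp
  next
    case (whead_app s'') then show ?thesis using whead_Lam by blast
  qed
next
  case (whead_app s s' t)
  from whead_app.prems show ?case
  proof (cases rule: whead.cases)
    case (whead_redex u) then show ?thesis using whead_app.hyps(1) whead_Lam by blast
  next
    case (whead_app s'') then show ?thesis using whead_app.hyps(2) by simp
  qed
qed

lemma head_det: "head x y \<Longrightarrow> head x z \<Longrightarrow> y = z"
proof (induct arbitrary: z rule: head.induct)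
  case (head_w s s')
  from head_w.prems show ?case
  proof (cases rule: head.cases)
    case head_w then show ?thesis using whead_det \<open>whead s s'\<close> by blast
  next
    case head_lam then show ?thesis using whead_Lam \<open>whead s s'\<close> by blast
  qed
next
  case (head_lam s s')
  from head_lam.prems show ?case
  proof (cases rule: head.cases)
    case head_w then show ?thesis using whead_Lam by blast
  next
    case head_lam then show ?thesis using head_lam.hyps(2) by auto
  qed
qed

lemma whead_apps: "atom a \<Longrightarrow> \<not> whead (apps a ts) y"
proof (induct ts arbitrary: y rule: rev_induct)
  case Nil then show ?case by (auto simp: atom_def elim: whead.cases)
next
  case (snoc x xs)
  show ?case
  proof
    assume "whead (apps a (xs @ [x])) y"
    then have "whead (App (apps a xs) x) y" by (simp add: apps_snoc)
    then show False
    proof (cases rule: whead.cases)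
      case (whead_redex s) then show False using apps_not_Lam[OF snoc(2)] by simp
    next
      case (whead_app s') then show False using snoc(1)[OF snoc(2)] by blast
    qed
  qed
qed

lemma head_nf: "atom a \<Longrightarrow> \<not> head (lams n (apps a ts)) y"
proof (induct n arbitrary: y)
  case 0 show ?case
  proof
    assume "head (lams 0 (apps a ts)) y"
    then have "head (apps a ts) y" by simp
    then show False
    proof (cases rule: head.cases)
      case head_w then show False using whead_apps[OF "0"] by blast
    next
      case head_lam then show False using apps_not_Lam[OF "0"] by blast
    qed
  qed
next
  case (Suc n) show ?case
  proof
    assume "head (lams (Suc n) (apps a ts)) y"
    then have "head (Lam (lams n (apps a ts))) y" by (simp add: lams_Suc)
    then show False
    proof (cases rule: head.cases)
      case head_w then show False using whead_Lam by blast
    next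
      case head_lam then show False using Suc by blast
    qed
  qed
qed

lemma head_rtc_det: "head\<^sup>*\<^sup>* t p \<Longrightarrow> head\<^sup>*\<^sup>* t q \<Longrightarrow> (\<And>y. \<not> head p y) \<Longrightarrow> (\<And>y. \<not> head q y) \<Longrightarrow> p = q"
proof (induct arbitrary: q rule: converse_rtranclp_induct)
  case base
  from base(1) show ?case
  proof (rule converse_rtranclpE)
    assume "p = q" then show ?thesis .
  next
    fix y assume "head p y" then show ?thesis using base(2) by blast
  qed
next
  case (step t t')
  from step.prems(1) show ?case
  proof (rule converse_rtranclpE)
    assume "t = q" then show ?thesis using step.prems(3) \<open>head t t'\<close> by blast
  next
    fix t'' assume a: "head t t''" "head\<^sup>*\<^sup>* t'' q"
    then have "t'' = t'" using head_det \<open>head t t'\<close> by blast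
    then show ?thesis using step.hyps(3) step.prems a by blast
  qed
qed

lemma whead_beta: "whead x y \<Longrightarrow> beta x y"
  by (induct rule: whead.induct) (auto intro: beta.intros)
lemma head_beta: "head x y \<Longrightarrow> beta x y"
  by (induct rule: head.induct) (auto intro: beta.intros whead_beta)

lemma good_atom_atom: "good_atom bt a \<Longrightarrow> atom a"
  by (auto simp: good_atom_def atom_def)

lemma shape:
  assumes "inf_N bt t x" "inf_N bt t y"
  shows "\<exists>n a us vs. atom a \<and> x = lams n (apps a us) \<and> y = lams n (apps a vs) \<and>
     list_all2 (\<lambda>u v. \<exists>t. inf_N bt t u \<and> inf_N bt t v) us vs"
  using assms(1)
proof (cases rule: inf_N.cases)
  case bot: inf_N_bot
  from assms(2) show ?thesis
  proof (cases rule: inf_N.cases)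
    case inf_N_bot
    then show ?thesis using bot by (intro exI[of _ 0] exI[of _ "Con bt"] exI[of _ "[]"]) (auto simp: atom_def)
  next
    case (inf_N_hnf a n ts ts')
    have "beta\<^sup>*\<^sup>* t (lams n (apps a ts))"
      using inf_N_hnf(3) by (rule rtranclp_mono[THEN predicate2D, rotated]) (auto intro: head_beta)
    then have "has_hnf bt t" using inf_N_hnf(2) unfolding has_hnf_def is_hnf_def by blast
    then show ?thesis using bot by simp
  qed
next
  case h1: (inf_N_hnf a n ts ts')
  from assms(2) show ?thesis
  proof (cases rule: inf_N.cases)
    case inf_N_bot
    have "beta\<^sup>*\<^sup>* t (lams n (apps a ts))"
      using h1(3) by (rule rtranclp_mono[THEN predicate2D, rotated]) (auto intro: head_beta)
    then have "has_hnf bt t" using h1(2) unfolding has_hnf_def is_hnf_def by blast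
    then show ?thesis using inf_N_bot by simp
  next
    case (inf_N_hnf a' n' ss ss')
    have eq: "lams n (apps a ts) = lams n' (apps a' ss)"
      by (rule head_rtc_det[OF h1(3) inf_N_hnf(3)])
         (rule head_nf[OF good_atom_atom[OF h1(2)]], rule head_nf[OF good_atom_atom[OF inf_N_hnf(2)]])
    have e: "n = n' \<and> a = a' \<and> ts = ss"
      by (rule lams_inj[OF good_atom_atom[OF h1(2)] good_atom_atom[OF inf_N_hnf(2)] eq])
    have L1: "list_all2 (inf_N bt) ts ts'" by (rule h1(4))
    have L2: "list_all2 (inf_N bt) ts ss'" using inf_N_hnf(4) e by simp
    have L: "list_all2 (\<lambda>u v. \<exists>t. inf_N bt t u \<and> inf_N bt t v) ts' ss'"
      unfolding list_all2_conv_all_nth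
    proof (intro conjI allI impI)
      show "length ts' = length ss'" using L1 L2 by (simp add: list_all2_conv_all_nth)
    next
      fix i assume "i < length ts'"
      then have "inf_N bt (ts!i) (ts'!i)" "inf_N bt (ts!i) (ss'!i)"
        using L1 L2 by (simp_all add: list_all2_conv_all_nth)
      then show "\<exists>t. inf_N bt t (ts'!i) \<and> inf_N bt t (ss'!i)" by blast
    qed
    show ?thesis
      apply (rule exI[of _ n], rule exI[of _ a], rule exI[of _ ts'], rule exI[of _ ss'])
      using h1(1) inf_N_hnf(1) e L good_atom_atom[OF h1(2)] by simp
  qed
qed

theorem lemma5p38:
  fixes bt :: 'c and t s1 s2 :: "'c trm"
  assumes "inf_N bt t s1" and "inf_N bt t s2"
  shows "s1 = s2"
proof -
  define S where "S = (\<lambda>x y. \<exists>n a us vs. atom a \<and> x = lams n (apps a us) \<and> y = lams n (apps a vs) \<and>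
     list_all2 (\<lambda>u v. \<exists>t. inf_N bt t u \<and> inf_N bt t v) us vs)"
  have R: "S x y" if "inf_N bt t' x" "inf_N bt t' y" for t' x y
    using shape[OF that] unfolding S_def by blast
  show ?thesis
  proof (rule trm.coinduct[of S])
    show "S s1 s2" using R assms by blast
  next
    fix x y assume "S x y"
    then obtain n a us vs where h: "atom a" "x = lams n (apps a us)" "y = lams n (apps a vs)"
      "list_all2 (\<lambda>u v. \<exists>t. inf_N bt t u \<and> inf_N bt t v) us vs" unfolding S_def by blast
    show "is_Var x = is_Var y \<and>
    (is_Var x \<longrightarrow> is_Var y \<longrightarrow> un_Var x = un_Var y) \<and>
    is_Con x = is_Con y \<and>
    (is_Con x \<longrightarrow> is_Con y \<longrightarrow> un_Con x = un_Con y) \<and>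
    is_App x = is_App y \<and>
    (is_App x \<longrightarrow> is_App y \<longrightarrow> S (un_App1 x) (un_App1 y) \<and> S (un_App2 x) (un_App2 y)) \<and>
    (is_Lam x \<longrightarrow> is_Lam y \<longrightarrow> S (un_Lam x) (un_Lam y))"
    proof (cases n)
      case (Suc m)
      have "S (lams m (apps a us)) (lams m (apps a vs))" unfolding S_def using h by blast
      then show ?thesis using h Suc by (simp add: lams_Suc)
    next
      case 0
      show ?thesis
      proof (cases us rule: rev_exhaust)
        case Nil
        then have "vs = []" using h(4) by simp
        then show ?thesis using h 0 Nil by (auto simp: atom_def)
      next
        case (snoc us' u)
        then obtain vs' v where vs: "vs = vs' @ [v]" "list_all2 (\<lambda>u v. \<exists>t. inf_N bt t u \<and> inf_N bt t v) us' vs'"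
          "\<exists>t. inf_N bt t u \<and> inf_N bt t v"
          using h(4) by (cases vs rule: rev_exhaust) (auto simp: list_all2_append1 dest: list_all2_lengthD)
        have "S (apps a us') (apps a vs')" unfolding S_def using h(1) vs(2)
          by (intro exI[of _ 0]) auto
        moreover have "S u v" using vs(3) R by blast
        ultimately show ?thesis using h 0 snoc vs by (simp add: apps_snoc)
      qed
    qed
  qed
qed
end
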